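(* Consider the $T$-stage game $\Gamma_T(p,q)$, and let $x\in X_T(p)$ and $y\in Y_T(q)$ be realization plans of players 1 and 2. For every $l\in L$ and $k\in K$: at $t=0$, $$u_{l,0}(x)=\min_{\tau\in\Delta(B)}\Big(\sum_{k\in K}x_{k,\emptyset,\emptyset}^TM^{kl}+\mathbf 1^Tu_{l,\emptyset,\emptyset}(x)\Big)\tau,\qquad w_{k,0}(y)=\max_{\sigma\in\Delta(A)}\sigma^T\Big(\sum_{l\in L}M^{kl}y_{l,\emptyset,\emptyset}+w_{k,\emptyset,\emptyset}(y)\mathbf1\Big),$$ and for every $t=1,\dots,T-1$, $h^A\in A^{t-1}$, $h^B\in B^{t-1}$, $a\in A$, $b\in B$, $$u^{a,b}_{l,h^A,h^B}(x)=\min_{\tau\in\Delta(B)}\Big(\sum_{k\in K}x_{k,(h^A,a),(h^B,b)}^TM^{kl}+\mathbf1^Tu_{l,(h^A,a),(h^B,b)}(x)\Big)\tau,$$ $$w^{a,b}_{k,h^A,h^B}(y)=\max_{\sigma\in\Delta(A)}\sigma^T\Big(\sum_{l\in L}M^{kl}y_{l,(h^A,a),(h^B,b)}+w_{k,(h^A,a),(h^B,b)}(y)\mathbf1\Big).$$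
   Context: Setting: nonempty finite type sets $K,L$, action sets $A,B$, payoff $M:K\times L\times A\times B\to\mathbb R$ with $M^{kl}=(M(k,l,a,b))_{a,b}$ an $|A|\times|B|$ matrix; $p\in\Delta(K),q\in\Delta(L)$ with positive entries; $\mathbf 1$ all-ones vector. In $\Gamma_T(p,q)$, $k\sim p$, $l\sim q$ are drawn independently and told privately to players 1, 2; for $T$ stages both choose $a_t\in A,b_t\in B$ simultaneously, publicly announced; behavior strategies $\sigma_t:K\times A^{t-1}\times B^{t-1}\to\Delta(A)$, $\tau_t:L\times A^{t-1}\times B^{t-1}\to\Delta(B)$; payoff $\mathbb E[\sum_{t=1}^TM(k,l,a_t,b_t)]$ to player 1. Realization plans: the realization plan of $\sigma$ is $x^{a_t}_{k,h^A_t,h^B_t}=p^k\prod_{s=1}^t\sigma^{a_s}_s(k,h^A_s,h^B_s)$ for $t=1,\dots,T$, $h_t^A=(a_1,\dots,a_{t-1})$, $h_t^B=(b_1,\dots,b_{t-1})$ and prefixes $h_s$; $x_{k,h^A,h^B}\in\mathbb R^{|A|}$ is the vector over the last action. $X_T(p)$ is the set of such families satisfying $x\ge0$, $\mathbf1^Tx_{k,\emptyset,\emptyset}=p^k$, $\mathbf1^Tx_{k,(h^A,a),(h^B,b)}=x^a_{k,h^A,h^B}$ (concatenated histories); each $x\in X_T(p)$ corresponds to a behavior strategy $\sigma$ via ratios. $Y_T(q)$, $y_{l,h^A,h^B}\in\mathbb R^{|B|}$ are defined symmetrically for player 2. Weighted future security payoffs: for $x\in X_T(p)$ with strategy $\sigma$,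 $t\in\{1,\dots,T-1\}$, $h^A\in A^{t-1},h^B\in B^{t-1}$, $a,b$: $u^{a,b}_{l,h^A,h^B}(x)=\min_{\tau_{t+1:T}(l)}\sum_kx^a_{k,h^A,h^B}\,\mathbb E[\sum_{s=t+1}^TM(k,l,a_s,b_s)\mid k,l,h^A_{t+1}=(h^A,a),h^B_{t+1}=(h^B,b)]$, minimum over behavior strategies of player 2 of type $l$ at stages $t+1,\dots,T$; $u_{l,h^A,h^B}(x)$ denotes the $|A|\times|B|$ matrix with these entries; $u_{l,h^A,h^B}(x)=0$ for histories of length $T-1$ (i.e. stage $T$); and $u_{l,0}(x)=\min_{\tau(l)}\sum_kp^k\mathbb E[\sum_{s=1}^TM(k,l,a_s,b_s)\mid k,l]$. Symmetrically, for $y\in Y_T(q)$ with strategy $\tau$: $w^{a,b}_{k,h^A,h^B}(y)=\max_{\sigma_{t+1:T}(k)}\sum_ly^b_{l,h^A,h^B}\,\mathbb E[\sum_{s=t+1}^TM\mid k,l,(h^A,a),(h^B,b)]$, the matrix $w_{k,h^A,h^B}(y)$ (zero at stage $T$), and $w_{k,0}(y)=\max_{\sigma(k)}\sum_lq^l\mathbb E[\sum_{s=1}^TM\mid k,l]$. *)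

theory Defs
  imports Main "HOL-Analysis.Analysis"
begin

text \<open>Histories are lists (oldest action first); a pair (hA, hB) with
  length hA = length hB = t-1 is the public history before stage t.\<close>

definition is_dist :: "('c::finite \<Rightarrow> real) \<Rightarrow> bool" where
  "is_dist d \<longleftrightarrow> (\<forall>c. d c \<ge> 0) \<and> (\<Sum>c\<in>UNIV. d c) = 1"

definition beh :: "('a list \<Rightarrow> 'b list \<Rightarrow> 'c::finite \<Rightarrow> real) set" where
  "beh = {s. \<forall>hA hB. is_dist (s hA hB)}"

primrec fut :: "nat \<Rightarrow> ('k \<Rightarrow> 'l \<Rightarrow> 'a::finite \<Rightarrow> 'b::finite \<Rightarrow> real)
   \<Rightarrow> ('k \<Rightarrow> 'a list \<Rightarrow> 'b list \<Rightarrow> 'a \<Rightarrow> real)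
   \<Rightarrow> ('l \<Rightarrow> 'a list \<Rightarrow> 'b list \<Rightarrow> 'b \<Rightarrow> real)
   \<Rightarrow> 'k \<Rightarrow> 'l \<Rightarrow> 'a list \<Rightarrow> 'b list \<Rightarrow> real" where
  "fut 0 M \<sigma> \<tau> k l hA hB = 0"
| "fut (Suc n) M \<sigma> \<tau> k l hA hB =
     (\<Sum>a\<in>UNIV. \<Sum>b\<in>UNIV. \<sigma> k hA hB a * \<tau> l hA hB b *
        (M k l a b + fut n M \<sigma> \<tau> k l (hA @ [a]) (hB @ [b])))"

text \<open>Realization plans: x k hA hB a = x^a_{k,hA,hB}, defined for
  length hA = length hB < T.\<close>
definition real_plan1 :: "nat \<Rightarrow> ('k \<Rightarrow> real) \<Rightarrow> ('k \<Rightarrow> 'a list \<Rightarrow> 'b list \<Rightarrow> 'a::finite \<Rightarrow> real) \<Rightarrow> bool" where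
  "real_plan1 T p x \<longleftrightarrow>
     (\<forall>k hA hB a. length hA = length hB \<and> length hA < T \<longrightarrow> x k hA hB a \<ge> 0) \<and>
     (\<forall>k. (\<Sum>a\<in>UNIV. x k [] [] a) = p k) \<and>
     (\<forall>k hA hB a b. length hA = length hB \<and> length hA + 1 < T \<longrightarrow>
        (\<Sum>a'\<in>UNIV. x k (hA @ [a]) (hB @ [b]) a') = x k hA hB a)"

definition real_plan2 :: "nat \<Rightarrow> ('l \<Rightarrow> real) \<Rightarrow> ('l \<Rightarrow> 'a list \<Rightarrow> 'b list \<Rightarrow> 'b::finite \<Rightarrow> real) \<Rightarrow> bool" where
  "real_plan2 T q y \<longleftrightarrow>
     (\<forall>l hA hB b. length hA = length hB \<and> length hA < T \<longrightarrow> y l hA hB b \<ge> 0) \<and>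
     (\<forall>l. (\<Sum>b\<in>UNIV. y l [] [] b) = q l) \<and>
     (\<forall>l hA hB a b. length hA = length hB \<and> length hA + 1 < T \<longrightarrow>
        (\<Sum>b'\<in>UNIV. y l (hA @ [a]) (hB @ [b]) b') = y l hA hB b)"

text \<open>Behavior strategy corresponding to a realization plan via ratios
  (uniform at unreached nodes, where it is irrelevant).\<close>
definition sigma_of :: "('k \<Rightarrow> real) \<Rightarrow> ('k \<Rightarrow> 'a list \<Rightarrow> 'b list \<Rightarrow> 'a::finite \<Rightarrow> real)
    \<Rightarrow> 'k \<Rightarrow> 'a list \<Rightarrow> 'b list \<Rightarrow> 'a \<Rightarrow> real" where
  "sigma_of p x k hA hB a =
     (let m = (if hA = [] then p k else x k (butlast hA) (butlast hB) (last hA))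
      in if m > 0 then x k hA hB a / m else 1 / real CARD('a))"

definition tau_of :: "('l \<Rightarrow> real) \<Rightarrow> ('l \<Rightarrow> 'a list \<Rightarrow> 'b list \<Rightarrow> 'b::finite \<Rightarrow> real)
    \<Rightarrow> 'l \<Rightarrow> 'a list \<Rightarrow> 'b list \<Rightarrow> 'b \<Rightarrow> real" where
  "tau_of q y l hA hB b =
     (let m = (if hB = [] then q l else y l (butlast hA) (butlast hB) (last hB))
      in if m > 0 then y l hA hB b / m else 1 / real CARD('b))"

text \<open>Weighted future security payoffs u^{a,b}_{l,hA,hB}(x) (stage t = length hA + 1),
  and u_{l,0}(x).\<close>
definition u_ab :: "nat \<Rightarrow> ('k::finite \<Rightarrow> 'l \<Rightarrow> 'a::finite \<Rightarrow> 'b::finite \<Rightarrow> real) \<Rightarrow> ('k \<Rightarrow> real)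
    \<Rightarrow> ('k \<Rightarrow> 'a list \<Rightarrow> 'b list \<Rightarrow> 'a \<Rightarrow> real) \<Rightarrow> 'l \<Rightarrow> 'a list \<Rightarrow> 'b list \<Rightarrow> 'a \<Rightarrow> 'b \<Rightarrow> real" where
  "u_ab T M p x l hA hB a b =
     (INF \<tau>\<in>beh. \<Sum>k\<in>UNIV. x k hA hB a *
        fut (T - Suc (length hA)) M (sigma_of p x) (\<lambda>_. \<tau>) k l (hA @ [a]) (hB @ [b]))"

definition u0 :: "nat \<Rightarrow> ('k::finite \<Rightarrow> 'l \<Rightarrow> 'a::finite \<Rightarrow> 'b::finite \<Rightarrow> real) \<Rightarrow> ('k \<Rightarrow> real)
    \<Rightarrow> ('k \<Rightarrow> 'a list \<Rightarrow> 'b list \<Rightarrow> 'a \<Rightarrow> real) \<Rightarrow> 'l \<Rightarrow> real" where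
  "u0 T M p x l = (INF \<tau>\<in>beh. \<Sum>k\<in>UNIV. p k * fut T M (sigma_of p x) (\<lambda>_. \<tau>) k l [] [])"

definition w_ab :: "nat \<Rightarrow> ('k \<Rightarrow> 'l::finite \<Rightarrow> 'a::finite \<Rightarrow> 'b::finite \<Rightarrow> real) \<Rightarrow> ('l \<Rightarrow> real)
    \<Rightarrow> ('l \<Rightarrow> 'a list \<Rightarrow> 'b list \<Rightarrow> 'b \<Rightarrow> real) \<Rightarrow> 'k \<Rightarrow> 'a list \<Rightarrow> 'b list \<Rightarrow> 'a \<Rightarrow> 'b \<Rightarrow> real" where
  "w_ab T M q y k hA hB a b =
     (SUP \<sigma>\<in>beh. \<Sum>l\<in>UNIV. y l hA hB b *
        fut (T - Suc (length hA)) M (\<lambda>_. \<sigma>) (tau_of q y) k l (hA @ [a]) (hB @ [b]))"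

definition w0 :: "nat \<Rightarrow> ('k \<Rightarrow> 'l::finite \<Rightarrow> 'a::finite \<Rightarrow> 'b::finite \<Rightarrow> real) \<Rightarrow> ('l \<Rightarrow> real)
    \<Rightarrow> ('l \<Rightarrow> 'a list \<Rightarrow> 'b list \<Rightarrow> 'b \<Rightarrow> real) \<Rightarrow> 'k \<Rightarrow> real" where
  "w0 T M q y k = (SUP \<sigma>\<in>beh. \<Sum>l\<in>UNIV. q l * fut T M (\<lambda>_. \<sigma>) (tau_of q y) k l [] [])"

end

theory Submission
  imports Defs
begin

lemma dist_nonneg: "is_dist d \<Longrightarrow> 0 \<le> d c"
  by (simp add: is_dist_def)

lemma dist_le1: "is_dist (d::'c::finite \<Rightarrow> real) \<Longrightarrow> d c \<le> 1"
proof -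
  assume d: "is_dist d"
  have "d c \<le> (\<Sum>c'\<in>UNIV. d c')" by (rule member_le_sum) (use d in \<open>auto simp: is_dist_def\<close>)
  then show ?thesis using d by (simp add: is_dist_def)
qed

lemma abs_sum2: "\<bar>\<Sum>a\<in>A. \<Sum>b\<in>B. F a b\<bar> \<le> (\<Sum>a\<in>A. \<Sum>b\<in>B. \<bar>F a b\<bar> :: real)"
  by (rule order_trans[OF sum_abs]) (rule sum_mono, rule sum_abs)

lemma beh_dist: "s \<in> beh \<Longrightarrow> is_dist (s hA hB)"
  by (simp add: beh_def)

lemma uniform_dist: "is_dist (\<lambda>_::'c::finite. 1 / real CARD('c))"
  by (simp add: is_dist_def)

lemma beh_ne: "(\<lambda>_ _. (\<lambda>_::'c::finite. 1 / real CARD('c))) \<in> beh"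
  by (simp add: beh_def uniform_dist)

lemma fut_loc_tau:
  "(\<And>gA gB. \<tau>1 l (hA@gA) (hB@gB) = \<tau>2 l (hA@gA) (hB@gB)) \<Longrightarrow>
   fut n M \<sigma> \<tau>1 k l hA hB = fut n M \<sigma> \<tau>2 k l hA hB"
proof (induction n arbitrary: hA hB)
  case 0 then show ?case by simp
next
  case (Suc n)
  have e: "\<tau>1 l hA hB = \<tau>2 l hA hB" using Suc.prems[of "[]" "[]"] by simp
  have "fut n M \<sigma> \<tau>1 k l (hA@[a]) (hB@[b]) = fut n M \<sigma> \<tau>2 k l (hA@[a]) (hB@[b])" for a b
    by (rule Suc.IH) (metis Suc.prems append_assoc)
  then show ?case by (simp add: e)
qed

lemma fut_loc_sigma:
  "(\<And>gA gB. \<sigma>1 k (hA@gA) (hB@gB) = \<sigma>2 k (hA@gA) (hB@gB)) \<Longrightarrow>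
   fut n M \<sigma>1 \<tau> k l hA hB = fut n M \<sigma>2 \<tau> k l hA hB"
proof (induction n arbitrary: hA hB)
  case 0 then show ?case by simp
next
  case (Suc n)
  have e: "\<sigma>1 k hA hB = \<sigma>2 k hA hB" using Suc.prems[of "[]" "[]"] by simp
  have "fut n M \<sigma>1 \<tau> k l (hA@[a]) (hB@[b]) = fut n M \<sigma>2 \<tau> k l (hA@[a]) (hB@[b])" for a b
    by (rule Suc.IH) (metis Suc.prems append_assoc)
  then show ?case by (simp add: e)
qed

lemma fut_bound_tau:
  assumes "\<And>hA hB b. 0 \<le> \<tau> l hA hB b \<and> \<tau> l hA hB b \<le> 1"
  shows "\<bar>fut n M \<sigma> \<tau> k l hA hB\<bar> \<le>
    fut n (\<lambda>k l a b. \<bar>M k l a b\<bar>) (\<lambda>k hA hB a. \<bar>\<sigma> k hA hB a\<bar>) (\<lambda>_ _ _ _. 1) k l hA hB"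
proof (induction n arbitrary: hA hB)
  case 0 then show ?case by simp
next
  case (Suc n)
  let ?B = "\<lambda>a b. fut n (\<lambda>k l a b. \<bar>M k l a b\<bar>) (\<lambda>k hA hB a. \<bar>\<sigma> k hA hB a\<bar>) (\<lambda>_ _ _ _. 1) k l (hA@[a]) (hB@[b])"
  let ?f = "\<lambda>a b. fut n M \<sigma> \<tau> k l (hA@[a]) (hB@[b])"
  have t: "\<bar>\<sigma> k hA hB a * \<tau> l hA hB b * (M k l a b + ?f a b)\<bar> \<le> \<bar>\<sigma> k hA hB a\<bar> * 1 * (\<bar>M k l a b\<bar> + ?B a b)" for a b
  proof -
    have "\<bar>M k l a b + ?f a b\<bar> \<le> \<bar>M k l a b\<bar> + ?B a b"
      using Suc.IH[of "hA@[a]" "hB@[b]"] by linarith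
    moreover have "\<bar>\<tau> l hA hB b\<bar> \<le> 1" using assms[of hA hB b] by auto
    ultimately show ?thesis unfolding abs_mult
      by (intro mult_mono) auto
  qed
  have "\<bar>fut (Suc n) M \<sigma> \<tau> k l hA hB\<bar> \<le> (\<Sum>a\<in>UNIV. \<Sum>b\<in>UNIV. \<bar>\<sigma> k hA hB a * \<tau> l hA hB b * (M k l a b + ?f a b)\<bar>)"
    by (simp only: fut.simps) (rule abs_sum2)
  also have "\<dots> \<le> (\<Sum>a\<in>UNIV. \<Sum>b\<in>UNIV. \<bar>\<sigma> k hA hB a\<bar> * 1 * (\<bar>M k l a b\<bar> + ?B a b))"
    by (intro sum_mono t)
  finally show ?case by simp
qed

lemma fut_bound_sigma:
  assumes "\<And>hA hB a. 0 \<le> \<sigma> k hA hB a \<and> \<sigma> k hA hB a \<le> 1"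
  shows "\<bar>fut n M \<sigma> \<tau> k l hA hB\<bar> \<le>
    fut n (\<lambda>k l a b. \<bar>M k l a b\<bar>) (\<lambda>_ _ _ _. 1) (\<lambda>l hA hB b. \<bar>\<tau> l hA hB b\<bar>) k l hA hB"
proof (induction n arbitrary: hA hB)
  case 0 then show ?case by simp
next
  case (Suc n)
  let ?B = "\<lambda>a b. fut n (\<lambda>k l a b. \<bar>M k l a b\<bar>) (\<lambda>_ _ _ _. 1) (\<lambda>l hA hB b. \<bar>\<tau> l hA hB b\<bar>) k l (hA@[a]) (hB@[b])"
  let ?f = "\<lambda>a b. fut n M \<sigma> \<tau> k l (hA@[a]) (hB@[b])"
  have t: "\<bar>\<sigma> k hA hB a * \<tau> l hA hB b * (M k l a b + ?f a b)\<bar> \<le> 1 * \<bar>\<tau> l hA hB b\<bar> * (\<bar>M k l a b\<bar> + ?B a b)" for a b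
  proof -
    have "\<bar>M k l a b + ?f a b\<bar> \<le> \<bar>M k l a b\<bar> + ?B a b"
      using Suc.IH[of "hA@[a]" "hB@[b]"] by linarith
    moreover have "\<bar>\<sigma> k hA hB a\<bar> \<le> 1" using assms[of hA hB a] by auto
    ultimately show ?thesis unfolding abs_mult
      by (intro mult_mono) auto
  qed
  have "\<bar>fut (Suc n) M \<sigma> \<tau> k l hA hB\<bar> \<le> (\<Sum>a\<in>UNIV. \<Sum>b\<in>UNIV. \<bar>\<sigma> k hA hB a * \<tau> l hA hB b * (M k l a b + ?f a b)\<bar>)"
    by (simp only: fut.simps) (rule abs_sum2)
  also have "\<dots> \<le> (\<Sum>a\<in>UNIV. \<Sum>b\<in>UNIV. 1 * \<bar>\<tau> l hA hB b\<bar> * (\<bar>M k l a b\<bar> + ?B a b))"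
    by (intro sum_mono t)
  finally show ?case by simp
qed

lemma expand_u:
  assumes "\<And>k a. wt k * \<sigma> k h0A h0B a = W k a"
  shows "(\<Sum>k\<in>UNIV. wt k * fut (Suc n) M \<sigma> \<tau> k l h0A h0B) =
    (\<Sum>b\<in>UNIV. \<tau> l h0A h0B b * ((\<Sum>k\<in>UNIV. \<Sum>a\<in>UNIV. W k a * M k l a b) +
       (\<Sum>a\<in>UNIV. \<Sum>k\<in>UNIV. W k a * fut n M \<sigma> \<tau> k l (h0A@[a]) (h0B@[b]))))"
proof -
  have "(\<Sum>k\<in>UNIV. wt k * fut (Suc n) M \<sigma> \<tau> k l h0A h0B) =
     (\<Sum>k\<in>UNIV. \<Sum>a\<in>UNIV. \<Sum>b\<in>UNIV. \<tau> l h0A h0B b * (W k a * M k l a b + W k a * fut n M \<sigma> \<tau> k l (h0A@[a]) (h0B@[b])))"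
    by (simp add: sum_distrib_left assms[symmetric] algebra_simps)
  also have "\<dots> = (\<Sum>k\<in>UNIV. \<Sum>b\<in>UNIV. \<Sum>a\<in>UNIV. \<tau> l h0A h0B b * (W k a * M k l a b + W k a * fut n M \<sigma> \<tau> k l (h0A@[a]) (h0B@[b])))"
    by (rule sum.cong[OF refl], rule sum.swap)
  also have "\<dots> = (\<Sum>b\<in>UNIV. \<Sum>k\<in>UNIV. \<Sum>a\<in>UNIV. \<tau> l h0A h0B b * (W k a * M k l a b + W k a * fut n M \<sigma> \<tau> k l (h0A@[a]) (h0B@[b])))"
    by (rule sum.swap)
  finally show ?thesis
    apply (simp only:)
    apply (rule sum.cong[OF refl])
    apply (simp only: sum_distrib_left distrib_left sum.distrib)
    apply (rule arg_cong2[where f="(+)"], rule refl, rule sum.swap)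
    done
qed

lemma expand_w:
  assumes "\<And>l b. wt l * \<tau> l h0A h0B b = W l b"
  shows "(\<Sum>l\<in>UNIV. wt l * fut (Suc n) M \<sigma> \<tau> k l h0A h0B) =
    (\<Sum>a\<in>UNIV. \<sigma> k h0A h0B a * ((\<Sum>l\<in>UNIV. \<Sum>b\<in>UNIV. M k l a b * W l b) +
       (\<Sum>b\<in>UNIV. \<Sum>l\<in>UNIV. W l b * fut n M \<sigma> \<tau> k l (h0A@[a]) (h0B@[b]))))"
proof -
  have "(\<Sum>l\<in>UNIV. wt l * fut (Suc n) M \<sigma> \<tau> k l h0A h0B) =
     (\<Sum>l\<in>UNIV. \<Sum>a\<in>UNIV. \<Sum>b\<in>UNIV. \<sigma> k h0A h0B a * (M k l a b * W l b + W l b * fut n M \<sigma> \<tau> k l (h0A@[a]) (h0B@[b])))"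
    by (simp add: sum_distrib_left assms[symmetric] algebra_simps)
  also have "\<dots> = (\<Sum>a\<in>UNIV. \<Sum>l\<in>UNIV. \<Sum>b\<in>UNIV. \<sigma> k h0A h0B a * (M k l a b * W l b + W l b * fut n M \<sigma> \<tau> k l (h0A@[a]) (h0B@[b])))"
    by (rule sum.swap)
  finally show ?thesis
    apply (simp only:)
    apply (rule sum.cong[OF refl])
    apply (simp only: sum_distrib_left distrib_left sum.distrib)
    apply (rule arg_cong2[where f="(+)"], rule refl, rule sum.swap)
    done
qed

lemma glue_inf:
  fixes C :: "'c::finite \<Rightarrow> real"
    and G :: "'c \<Rightarrow> 'd::finite \<Rightarrow> ('a list \<Rightarrow> 'b list \<Rightarrow> 'c \<Rightarrow> real) \<Rightarrow> real"
    and sub :: "'c \<Rightarrow> 'd \<Rightarrow> 'a list \<Rightarrow> 'b list \<Rightarrow> bool"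
    and h0A :: "'a list" and h0B :: "'b list"
  assumes disj: "\<And>c d c' d' hA hB. sub c d hA hB \<Longrightarrow> sub c' d' hA hB \<Longrightarrow> c = c' \<and> d = d'"
    and root: "\<And>c d. \<not> sub c d h0A h0B"
    and dep: "\<And>c d \<tau>1 \<tau>2. (\<And>hA hB. sub c d hA hB \<Longrightarrow> \<tau>1 hA hB = \<tau>2 hA hB) \<Longrightarrow> G c d \<tau>1 = G c d \<tau>2"
    and bdd: "\<And>c d. \<exists>m. \<forall>\<tau>\<in>beh. m \<le> G c d \<tau>"
  shows "(INF \<tau>\<in>beh. \<Sum>c\<in>UNIV. \<tau> h0A h0B c * (C c + (\<Sum>d\<in>UNIV. G c d \<tau>))) =
         (INF \<delta>\<in>{\<delta>. is_dist \<delta>}. \<Sum>c\<in>UNIV. (C c + (\<Sum>d\<in>UNIV. (INF \<tau>\<in>beh. G c d \<tau>))) * \<delta> c)"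
proof -
  define I where "I c d = (INF \<tau>\<in>beh. G c d \<tau>)" for c d
  define R where "R \<delta> = (\<Sum>c\<in>UNIV. (C c + (\<Sum>d\<in>UNIV. I c d)) * \<delta> c)" for \<delta>
  define L where "L (\<tau>::'a list \<Rightarrow> 'b list \<Rightarrow> 'c \<Rightarrow> real) = (\<Sum>c\<in>UNIV. \<tau> h0A h0B c * (C c + (\<Sum>d\<in>UNIV. G c d \<tau>)))" for \<tau>
  define S where "S = (\<Sum>c\<in>UNIV. \<bar>C c + (\<Sum>d\<in>UNIV. I c d)\<bar>)"
  have bG: "bdd_below (G c d ` beh)" for c d using bdd[of c d] by (auto simp: bdd_below_def)
  have low: "\<tau> \<in> beh \<Longrightarrow> I c d \<le> G c d \<tau>" for \<tau> c d unfolding I_def by (rule cINF_lower[OF bG])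
  have Rlow: "- S \<le> R \<delta>" if d: "is_dist \<delta>" for \<delta> :: "'c \<Rightarrow> real"
  proof -
    have "- \<bar>C c + (\<Sum>d\<in>UNIV. I c d)\<bar> \<le> (C c + (\<Sum>d\<in>UNIV. I c d)) * \<delta> c" for c
    proof -
      let ?X = "C c + (\<Sum>d\<in>UNIV. I c d)"
      have "- \<bar>?X\<bar> * \<delta> c \<le> ?X * \<delta> c" by (rule mult_right_mono) (auto simp: dist_nonneg[OF d])
      moreover have "\<bar>?X\<bar> * \<delta> c \<le> \<bar>?X\<bar>" by (rule mult_left_le) (auto simp: dist_le1[OF d])
      ultimately show ?thesis by linarith
    qed
    then have "(\<Sum>c\<in>UNIV. - \<bar>C c + (\<Sum>d\<in>UNIV. I c d)\<bar>) \<le> R \<delta>"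
      unfolding R_def by (rule sum_mono)
    then show ?thesis by (simp add: S_def sum_negf)
  qed
  have bR: "bdd_below (R ` {\<delta>. is_dist \<delta>})" by (rule bdd_belowI[of _ "- S"]) (auto intro: Rlow)
  have RL: "R (\<tau> h0A h0B) \<le> L \<tau>" if t: "\<tau> \<in> beh" for \<tau> :: "'a list \<Rightarrow> 'b list \<Rightarrow> 'c \<Rightarrow> real"
    unfolding R_def L_def
  proof (rule sum_mono)
    fix c
    have "\<tau> h0A h0B c * (C c + (\<Sum>d\<in>UNIV. I c d)) \<le> \<tau> h0A h0B c * (C c + (\<Sum>d\<in>UNIV. G c d \<tau>))"
      by (intro mult_left_mono add_left_mono sum_mono low t dist_nonneg beh_dist)
    then show "(C c + (\<Sum>d\<in>UNIV. I c d)) * \<tau> h0A h0B c \<le> \<tau> h0A h0B c * (C c + (\<Sum>d\<in>UNIV. G c d \<tau>))"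
      by (simp add: mult.commute)
  qed
  have bL: "bdd_below (L ` beh)"
    by (rule bdd_belowI[of _ "- S"]) (auto intro: order_trans[OF Rlow RL] beh_dist)
  have dne: "{\<delta>. is_dist \<delta>} \<noteq> {}" using uniform_dist by blast
  have bne: "beh \<noteq> {}" using beh_ne by blast
  have A: "(INF \<delta>\<in>{\<delta>. is_dist \<delta>}. R \<delta>) \<le> (INF \<tau>\<in>beh. L \<tau>)"
  proof (rule cINF_greatest[OF bne])
    fix \<tau> :: "'a list \<Rightarrow> 'b list \<Rightarrow> 'c \<Rightarrow> real" assume t: "\<tau> \<in> beh"
    have "(INF \<delta>\<in>{\<delta>. is_dist \<delta>}. R \<delta>) \<le> R (\<tau> h0A h0B)"
      by (rule cINF_lower[OF bR]) (simp add: beh_dist t)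
    also have "\<dots> \<le> L \<tau>" by (rule RL[OF t])
    finally show "(INF \<delta>\<in>{\<delta>. is_dist \<delta>}. R \<delta>) \<le> L \<tau>" .
  qed
  have B: "(INF \<tau>\<in>beh. L \<tau>) \<le> (INF \<delta>\<in>{\<delta>. is_dist \<delta>}. R \<delta>)"
  proof (rule cINF_greatest[OF dne])
    fix \<delta> :: "'c \<Rightarrow> real" assume "\<delta> \<in> {\<delta>. is_dist \<delta>}" hence d\<delta>: "is_dist \<delta>" by simp
    show "(INF \<tau>\<in>beh. L \<tau>) \<le> R \<delta>"
    proof (rule field_le_epsilon)
      fix e :: real assume e: "0 < e"
      define \<epsilon> where "\<epsilon> = e / real CARD('d)"
      have \<epsilon>: "0 < \<epsilon>" using e by (simp add: \<epsilon>_def)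
      have ex: "\<exists>\<tau>\<in>beh. G c d \<tau> < I c d + \<epsilon>" for c d
      proof -
        have "(INF \<tau>\<in>beh. G c d \<tau>) < (INF \<tau>\<in>beh. G c d \<tau>) + \<epsilon>" using \<epsilon> by simp
        then show ?thesis unfolding I_def by (subst (asm) cINF_less_iff[OF bne bG])
      qed
      obtain f where f: "\<And>c d. f c d \<in> beh \<and> G c d (f c d) < I c d + \<epsilon>"
        using ex by metis
      define \<tau>s where "\<tau>s (hA::'a list) (hB::'b list) = (if hA = h0A \<and> hB = h0B then \<delta>
          else (let cd = (SOME cd. sub (fst cd) (snd cd) hA hB) in f (fst cd) (snd cd) hA hB))" for hA hB
      have \<tau>s_beh: "\<tau>s \<in> beh" unfolding beh_def \<tau>s_def using f d\<delta> by (auto simp: Let_def beh_dist)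
      have \<tau>s_root: "\<tau>s h0A h0B = \<delta>" by (simp add: \<tau>s_def)
      have \<tau>s_sub: "\<tau>s hA hB = f c d hA hB" if s: "sub c d hA hB" for c d hA hB
      proof -
        have nr: "\<not> (hA = h0A \<and> hB = h0B)" using s root by blast
        let ?cd = "SOME cd. sub (fst cd) (snd cd) hA hB"
        have "sub (fst ?cd) (snd ?cd) hA hB" by (rule someI[of _ "(c,d)"]) (simp add: s)
        hence "fst ?cd = c \<and> snd ?cd = d" using disj s by blast
        hence "?cd = (c,d)" by (simp add: prod_eq_iff)
        thus ?thesis using nr unfolding \<tau>s_def Let_def by (simp only: if_False) simp
      qed
      have Gs: "G c d \<tau>s = G c d (f c d)" for c d by (rule dep) (rule \<tau>s_sub)
      have "(INF \<tau>\<in>beh. L \<tau>) \<le> L \<tau>s" by (rule cINF_lower[OF bL \<tau>s_beh])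
      also have "L \<tau>s \<le> (\<Sum>c\<in>UNIV. \<delta> c * (C c + (\<Sum>d\<in>UNIV. I c d + \<epsilon>)))"
        unfolding L_def \<tau>s_root Gs
        by (intro sum_mono mult_left_mono add_left_mono dist_nonneg[OF d\<delta>]) (use f less_imp_le in blast)
      also have "\<dots> = R \<delta> + e * (\<Sum>c\<in>UNIV. \<delta> c)"
      proof -
        have s1: "(\<Sum>d\<in>UNIV. I c d + \<epsilon>) = (\<Sum>d\<in>UNIV. I c d) + e" for c
          by (simp add: sum.distrib \<epsilon>_def)
        show ?thesis unfolding s1 R_def by (simp add: sum.distrib sum_distrib_left algebra_simps)
      qed
      also have "\<dots> = R \<delta> + e" using d\<delta> by (simp add: is_dist_def)
      finally show "(INF \<tau>\<in>beh. L \<tau>) \<le> R \<delta> + e" .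
    qed
  qed
  have "(INF \<tau>\<in>beh. L \<tau>) = (INF \<delta>\<in>{\<delta>. is_dist \<delta>}. R \<delta>)" by (rule antisym[OF B A])
  then show ?thesis unfolding L_def R_def I_def .
qed

lemma neg_SUP: "(SUP x\<in>S. f x) = - (INF x\<in>S. - f x :: real)"
  by (simp add: Inf_real_def image_image)

lemma glue_sup:
  fixes C :: "'c::finite \<Rightarrow> real"
    and G :: "'c \<Rightarrow> 'd::finite \<Rightarrow> ('a list \<Rightarrow> 'b list \<Rightarrow> 'c \<Rightarrow> real) \<Rightarrow> real"
    and sub :: "'c \<Rightarrow> 'd \<Rightarrow> 'a list \<Rightarrow> 'b list \<Rightarrow> bool"
    and h0A :: "'a list" and h0B :: "'b list"
  assumes disj: "\<And>c d c' d' hA hB. sub c d hA hB \<Longrightarrow> sub c' d' hA hB \<Longrightarrow> c = c' \<and> d = d'"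
    and root: "\<And>c d. \<not> sub c d h0A h0B"
    and dep: "\<And>c d \<tau>1 \<tau>2. (\<And>hA hB. sub c d hA hB \<Longrightarrow> \<tau>1 hA hB = \<tau>2 hA hB) \<Longrightarrow> G c d \<tau>1 = G c d \<tau>2"
    and bdd: "\<And>c d. \<exists>m. \<forall>\<tau>\<in>beh. G c d \<tau> \<le> m"
  shows "(SUP \<tau>\<in>beh. \<Sum>c\<in>UNIV. \<tau> h0A h0B c * (C c + (\<Sum>d\<in>UNIV. G c d \<tau>))) =
         (SUP \<delta>\<in>{\<delta>. is_dist \<delta>}. \<Sum>c\<in>UNIV. \<delta> c * (C c + (\<Sum>d\<in>UNIV. (SUP \<tau>\<in>beh. G c d \<tau>))))"
proof -
  define Lf where "Lf (\<tau>::'a list \<Rightarrow> 'b list \<Rightarrow> 'c \<Rightarrow> real) = (\<Sum>c\<in>UNIV. \<tau> h0A h0B c * (C c + (\<Sum>d\<in>UNIV. G c d \<tau>)))" for \<tau>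
  define Rf where "Rf (\<delta>::'c \<Rightarrow> real) = (\<Sum>c\<in>UNIV. \<delta> c * (C c + (\<Sum>d\<in>UNIV. (SUP \<tau>\<in>beh. G c d \<tau>))))" for \<delta>
  have gi: "(INF \<tau>\<in>beh. \<Sum>c\<in>UNIV. \<tau> h0A h0B c * ((- C c) + (\<Sum>d\<in>UNIV. - G c d \<tau>))) =
         (INF \<delta>\<in>{\<delta>. is_dist \<delta>}. \<Sum>c\<in>UNIV. ((- C c) + (\<Sum>d\<in>UNIV. (INF \<tau>\<in>beh. - G c d \<tau>))) * \<delta> c)"
  proof (rule glue_inf[where sub=sub, OF disj root])
    fix c d and \<tau>1 \<tau>2 :: "'a list \<Rightarrow> 'b list \<Rightarrow> 'c \<Rightarrow> real"
    assume P: "\<And>hA hB. sub c d hA hB \<Longrightarrow> \<tau>1 hA hB = \<tau>2 hA hB"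
    show "- G c d \<tau>1 = - G c d \<tau>2" using dep[OF P] by simp
  next
    fix c d
    obtain m where "\<forall>\<tau>\<in>beh. G c d \<tau> \<le> m" using bdd[of c d] by blast
    then show "\<exists>m. \<forall>\<tau>\<in>beh. m \<le> - G c d \<tau>" by (intro exI[of _ "-m"]) auto
  qed blast+
  have L: "(\<Sum>c\<in>UNIV. \<tau> h0A h0B c * ((- C c) + (\<Sum>d\<in>UNIV. - G c d \<tau>))) = - Lf \<tau>" for \<tau>
  proof -
    have "(\<Sum>c\<in>UNIV. \<tau> h0A h0B c * ((- C c) + (\<Sum>d\<in>UNIV. - G c d \<tau>))) =
          (\<Sum>c\<in>UNIV. - (\<tau> h0A h0B c * (C c + (\<Sum>d\<in>UNIV. G c d \<tau>))))"
      by (rule sum.cong) (simp_all add: sum_negf algebra_simps)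
    then show ?thesis by (simp add: Lf_def sum_negf)
  qed
  have R: "(\<Sum>c\<in>UNIV. ((- C c) + (\<Sum>d\<in>UNIV. (INF \<tau>\<in>beh. - G c d \<tau>))) * \<delta> c) = - Rf \<delta>" for \<delta>
  proof -
    have i: "(INF \<tau>\<in>beh. - G c d \<tau>) = - (SUP \<tau>\<in>beh. G c d \<tau>)" for c d
      by (simp add: neg_SUP)
    have "(\<Sum>c\<in>UNIV. ((- C c) + (\<Sum>d\<in>UNIV. (INF \<tau>\<in>beh. - G c d \<tau>))) * \<delta> c) =
          (\<Sum>c\<in>UNIV. - (\<delta> c * (C c + (\<Sum>d\<in>UNIV. (SUP \<tau>\<in>beh. G c d \<tau>)))))"
      by (rule sum.cong) (simp_all add: i sum_negf algebra_simps)
    then show ?thesis by (simp add: Rf_def sum_negf)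
  qed
  have "(INF \<tau>\<in>beh. - Lf \<tau>) = (INF \<delta>\<in>{\<delta>. is_dist \<delta>}. - Rf \<delta>)" using gi by (simp only: L R)
  then have "- (INF \<tau>\<in>beh. - Lf \<tau>) = - (INF \<delta>\<in>{\<delta>. is_dist \<delta>}. - Rf \<delta>)" by simp
  then have "(SUP \<tau>\<in>beh. Lf \<tau>) = (SUP \<delta>\<in>{\<delta>. is_dist \<delta>}. Rf \<delta>)"
    using neg_SUP[where S=beh and f=Lf] neg_SUP[where S="{\<delta>. is_dist \<delta>}" and f=Rf] by simp
  then show ?thesis by (simp only: Lf_def Rf_def)
qed

lemma dist01: "s \<in> beh \<Longrightarrow> 0 \<le> s hA hB c \<and> s hA hB c \<le> 1"
proof -
  assume "s \<in> beh"
  then have "is_dist (s hA hB)" by (rule beh_dist)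
  then show ?thesis using dist_nonneg dist_le1 by metis
qed

lemma u_step:
  fixes M :: "'k::finite \<Rightarrow> 'l \<Rightarrow> 'a::finite \<Rightarrow> 'b::finite \<Rightarrow> real"
    and \<sigma> :: "'k \<Rightarrow> 'a list \<Rightarrow> 'b list \<Rightarrow> 'a \<Rightarrow> real"
    and wt :: "'k \<Rightarrow> real" and W :: "'k \<Rightarrow> 'a \<Rightarrow> real" and h0A :: "'a list" and h0B :: "'b list"
  assumes W: "\<And>k a. wt k * \<sigma> k h0A h0B a = W k a"
  shows "(INF \<tau>\<in>beh. \<Sum>k\<in>UNIV. wt k * fut (Suc n) M \<sigma> (\<lambda>_. \<tau>) k l h0A h0B) =
    (INF \<delta>\<in>{\<delta>. is_dist \<delta>}. \<Sum>b\<in>UNIV. ((\<Sum>k\<in>UNIV. \<Sum>a\<in>UNIV. W k a * M k l a b) +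
      (\<Sum>a\<in>UNIV. (INF \<tau>\<in>beh. \<Sum>k\<in>UNIV. W k a * fut n M \<sigma> (\<lambda>_. \<tau>) k l (h0A@[a]) (h0B@[b])))) * \<delta> b)"
proof -
  have e: "(\<Sum>k\<in>UNIV. wt k * fut (Suc n) M \<sigma> (\<lambda>_. \<tau>) k l h0A h0B) =
     (\<Sum>b\<in>UNIV. \<tau> h0A h0B b * ((\<Sum>k\<in>UNIV. \<Sum>a\<in>UNIV. W k a * M k l a b) +
       (\<Sum>a\<in>UNIV. \<Sum>k\<in>UNIV. W k a * fut n M \<sigma> (\<lambda>_. \<tau>) k l (h0A@[a]) (h0B@[b]))))" for \<tau>
    using expand_u[where wt=wt and \<sigma>=\<sigma> and h0A=h0A and h0B=h0B and W=W and \<tau>="\<lambda>_. \<tau>" and l=l and n=n and M=M, OF W] by simp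
  show ?thesis
    unfolding e
  proof (rule glue_inf[where sub="\<lambda>b a hA hB. \<exists>gA gB. hA = h0A@[a]@gA \<and> hB = h0B@[b]@gB"
        and C="\<lambda>b. \<Sum>k\<in>UNIV. \<Sum>a\<in>UNIV. W k a * M k l a b"
        and G="\<lambda>b a \<tau>. \<Sum>k\<in>UNIV. W k a * fut n M \<sigma> (\<lambda>_. \<tau>) k l (h0A@[a]) (h0B@[b])"])
    fix c d c' d' hA hB
    assume "\<exists>gA gB. hA = h0A@[d]@gA \<and> hB = h0B@[c]@gB" "\<exists>gA gB. hA = h0A@[d']@gA \<and> hB = h0B@[c']@gB"
    then show "c = c' \<and> d = d'" by auto
  next
    fix c d show "\<not> (\<exists>gA gB. h0A = h0A@[d]@gA \<and> h0B = h0B@[c]@gB)" by simp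
  next
    fix c d and \<tau>1 \<tau>2 :: "'a list \<Rightarrow> 'b list \<Rightarrow> 'b \<Rightarrow> real"
    assume P: "\<And>hA hB. \<exists>gA gB. hA = h0A@[d]@gA \<and> hB = h0B@[c]@gB \<Longrightarrow> \<tau>1 hA hB = \<tau>2 hA hB"
    have "fut n M \<sigma> (\<lambda>_. \<tau>1) k l (h0A@[d]) (h0B@[c]) = fut n M \<sigma> (\<lambda>_. \<tau>2) k l (h0A@[d]) (h0B@[c])" for k
      by (rule fut_loc_tau) (simp add: P)
    then show "(\<Sum>k\<in>UNIV. W k d * fut n M \<sigma> (\<lambda>_. \<tau>1) k l (h0A@[d]) (h0B@[c])) =
               (\<Sum>k\<in>UNIV. W k d * fut n M \<sigma> (\<lambda>_. \<tau>2) k l (h0A@[d]) (h0B@[c]))" by simp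
  next
    fix c d
    define B where "B k = fut n (\<lambda>k l a b. \<bar>M k l a b\<bar>) (\<lambda>k hA hB a. \<bar>\<sigma> k hA hB a\<bar>) (\<lambda>_ _ _ _. 1) k l (h0A@[d]) (h0B@[c])" for k
    have "\<forall>\<tau>\<in>beh. - (\<Sum>k\<in>UNIV. \<bar>W k d\<bar> * B k) \<le> (\<Sum>k\<in>UNIV. W k d * fut n M \<sigma> (\<lambda>_. \<tau>) k l (h0A@[d]) (h0B@[c]))"
    proof
      fix \<tau> :: "'a list \<Rightarrow> 'b list \<Rightarrow> 'b \<Rightarrow> real" assume t: "\<tau> \<in> beh"
      have "- (\<bar>W k d\<bar> * B k) \<le> W k d * fut n M \<sigma> (\<lambda>_. \<tau>) k l (h0A@[d]) (h0B@[c])" for k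
      proof -
        have "\<bar>fut n M \<sigma> (\<lambda>_. \<tau>) k l (h0A@[d]) (h0B@[c])\<bar> \<le> B k"
          unfolding B_def by (rule fut_bound_tau) (simp add: dist01[OF t])
        then have "\<bar>W k d * fut n M \<sigma> (\<lambda>_. \<tau>) k l (h0A@[d]) (h0B@[c])\<bar> \<le> \<bar>W k d\<bar> * B k"
          unfolding abs_mult by (rule mult_left_mono) simp
        then show ?thesis by linarith
      qed
      then have "(\<Sum>k\<in>UNIV. - (\<bar>W k d\<bar> * B k)) \<le> (\<Sum>k\<in>UNIV. W k d * fut n M \<sigma> (\<lambda>_. \<tau>) k l (h0A@[d]) (h0B@[c]))"
        by (rule sum_mono)
      then show "- (\<Sum>k\<in>UNIV. \<bar>W k d\<bar> * B k) \<le> (\<Sum>k\<in>UNIV. W k d * fut n M \<sigma> (\<lambda>_. \<tau>) k l (h0A@[d]) (h0B@[c]))"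
        by (simp add: sum_negf)
    qed
    then show "\<exists>m. \<forall>\<tau>\<in>beh. m \<le> (\<Sum>k\<in>UNIV. W k d * fut n M \<sigma> (\<lambda>_. \<tau>) k l (h0A@[d]) (h0B@[c]))" by blast
  qed
qed

lemma w_step:
  fixes M :: "'k \<Rightarrow> 'l::finite \<Rightarrow> 'a::finite \<Rightarrow> 'b::finite \<Rightarrow> real"
    and \<tau> :: "'l \<Rightarrow> 'a list \<Rightarrow> 'b list \<Rightarrow> 'b \<Rightarrow> real"
    and wt :: "'l \<Rightarrow> real" and W :: "'l \<Rightarrow> 'b \<Rightarrow> real" and h0A :: "'a list" and h0B :: "'b list"
  assumes W: "\<And>l b. wt l * \<tau> l h0A h0B b = W l b"
  shows "(SUP \<sigma>\<in>beh. \<Sum>l\<in>UNIV. wt l * fut (Suc n) M (\<lambda>_. \<sigma>) \<tau> k l h0A h0B) =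
    (SUP \<delta>\<in>{\<delta>. is_dist \<delta>}. \<Sum>a\<in>UNIV. \<delta> a * ((\<Sum>l\<in>UNIV. \<Sum>b\<in>UNIV. M k l a b * W l b) +
      (\<Sum>b\<in>UNIV. (SUP \<sigma>\<in>beh. \<Sum>l\<in>UNIV. W l b * fut n M (\<lambda>_. \<sigma>) \<tau> k l (h0A@[a]) (h0B@[b])))))"
proof -
  have e: "(\<Sum>l\<in>UNIV. wt l * fut (Suc n) M (\<lambda>_. \<sigma>) \<tau> k l h0A h0B) =
     (\<Sum>a\<in>UNIV. \<sigma> h0A h0B a * ((\<Sum>l\<in>UNIV. \<Sum>b\<in>UNIV. M k l a b * W l b) +
       (\<Sum>b\<in>UNIV. \<Sum>l\<in>UNIV. W l b * fut n M (\<lambda>_. \<sigma>) \<tau> k l (h0A@[a]) (h0B@[b]))))" for \<sigma>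
    using expand_w[where wt=wt and \<tau>=\<tau> and h0A=h0A and h0B=h0B and W=W and \<sigma>="\<lambda>_. \<sigma>" and k=k and n=n and M=M, OF W] by simp
  show ?thesis
    unfolding e
  proof (rule glue_sup[where sub="\<lambda>a b hA hB. \<exists>gA gB. hA = h0A@[a]@gA \<and> hB = h0B@[b]@gB"
        and C="\<lambda>a. \<Sum>l\<in>UNIV. \<Sum>b\<in>UNIV. M k l a b * W l b"
        and G="\<lambda>a b \<sigma>. \<Sum>l\<in>UNIV. W l b * fut n M (\<lambda>_. \<sigma>) \<tau> k l (h0A@[a]) (h0B@[b])"])
    fix c d c' d' hA hB
    assume "\<exists>gA gB. hA = h0A@[c]@gA \<and> hB = h0B@[d]@gB" "\<exists>gA gB. hA = h0A@[c']@gA \<and> hB = h0B@[d']@gB"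
    then show "c = c' \<and> d = d'" by auto
  next
    fix c d show "\<not> (\<exists>gA gB. h0A = h0A@[c]@gA \<and> h0B = h0B@[d]@gB)" by simp
  next
    fix c d and \<sigma>1 \<sigma>2 :: "'a list \<Rightarrow> 'b list \<Rightarrow> 'a \<Rightarrow> real"
    assume P: "\<And>hA hB. \<exists>gA gB. hA = h0A@[c]@gA \<and> hB = h0B@[d]@gB \<Longrightarrow> \<sigma>1 hA hB = \<sigma>2 hA hB"
    have "fut n M (\<lambda>_. \<sigma>1) \<tau> k l (h0A@[c]) (h0B@[d]) = fut n M (\<lambda>_. \<sigma>2) \<tau> k l (h0A@[c]) (h0B@[d])" for l
      by (rule fut_loc_sigma) (simp add: P)
    then show "(\<Sum>l\<in>UNIV. W l d * fut n M (\<lambda>_. \<sigma>1) \<tau> k l (h0A@[c]) (h0B@[d])) =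
               (\<Sum>l\<in>UNIV. W l d * fut n M (\<lambda>_. \<sigma>2) \<tau> k l (h0A@[c]) (h0B@[d]))" by simp
  next
    fix c d
    define B where "B l = fut n (\<lambda>k l a b. \<bar>M k l a b\<bar>) (\<lambda>_ _ _ _. 1) (\<lambda>l hA hB b. \<bar>\<tau> l hA hB b\<bar>) k l (h0A@[c]) (h0B@[d])" for l
    have "\<forall>\<sigma>\<in>beh. (\<Sum>l\<in>UNIV. W l d * fut n M (\<lambda>_. \<sigma>) \<tau> k l (h0A@[c]) (h0B@[d])) \<le> (\<Sum>l\<in>UNIV. \<bar>W l d\<bar> * B l)"
    proof
      fix \<sigma> :: "'a list \<Rightarrow> 'b list \<Rightarrow> 'a \<Rightarrow> real" assume t: "\<sigma> \<in> beh"
      have "W l d * fut n M (\<lambda>_. \<sigma>) \<tau> k l (h0A@[c]) (h0B@[d]) \<le> \<bar>W l d\<bar> * B l" for l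
      proof -
        have "\<bar>fut n M (\<lambda>_. \<sigma>) \<tau> k l (h0A@[c]) (h0B@[d])\<bar> \<le> B l"
          unfolding B_def by (rule fut_bound_sigma) (simp add: dist01[OF t])
        then have "\<bar>W l d * fut n M (\<lambda>_. \<sigma>) \<tau> k l (h0A@[c]) (h0B@[d])\<bar> \<le> \<bar>W l d\<bar> * B l"
          unfolding abs_mult by (rule mult_left_mono) simp
        then show ?thesis by linarith
      qed
      then show "(\<Sum>l\<in>UNIV. W l d * fut n M (\<lambda>_. \<sigma>) \<tau> k l (h0A@[c]) (h0B@[d])) \<le> (\<Sum>l\<in>UNIV. \<bar>W l d\<bar> * B l)"
        by (rule sum_mono)
    qed
    then show "\<exists>m. \<forall>\<sigma>\<in>beh. (\<Sum>l\<in>UNIV. W l d * fut n M (\<lambda>_. \<sigma>) \<tau> k l (h0A@[c]) (h0B@[d])) \<le> m" by blast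
  qed
qed

lemma wsig:
  assumes x: "real_plan1 T p x" and len: "length hA = length hB" "length hA + 2 \<le> T"
  shows "x k hA hB a * sigma_of p x k (hA@[a]) (hB@[b]) a' = x k (hA@[a]) (hB@[b]) a'"
proof -
  have m0: "0 \<le> x k hA hB a" using x len unfolding real_plan1_def by auto
  show ?thesis
  proof (cases "x k hA hB a > 0")
    case True thus ?thesis by (simp add: sigma_of_def Let_def)
  next
    case False then have z: "x k hA hB a = 0" using m0 by simp
    have sm: "(\<Sum>a''\<in>UNIV. x k (hA@[a]) (hB@[b]) a'') = 0" using x len z unfolding real_plan1_def by auto
    have nn: "\<forall>a''. 0 \<le> x k (hA@[a]) (hB@[b]) a''" using x len unfolding real_plan1_def by auto
    have "x k (hA@[a]) (hB@[b]) a' = 0" proof -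
      have "x k (hA@[a]) (hB@[b]) a' \<le> (\<Sum>z\<in>UNIV. x k (hA@[a]) (hB@[b]) z)" by (rule member_le_sum) (use nn in auto)
      then show ?thesis using sm nn by (metis order_antisym)
    qed
    thus ?thesis using z by simp
  qed
qed

lemma wtau:
  assumes y: "real_plan2 T q y" and len: "length hA = length hB" "length hA + 2 \<le> T"
  shows "y l hA hB b * tau_of q y l (hA@[a]) (hB@[b]) b' = y l (hA@[a]) (hB@[b]) b'"
proof -
  have m0: "0 \<le> y l hA hB b" using y len unfolding real_plan2_def by auto
  show ?thesis
  proof (cases "y l hA hB b > 0")
    case True thus ?thesis by (simp add: tau_of_def Let_def)
  next
    case False then have z: "y l hA hB b = 0" using m0 by simp
    have sm: "(\<Sum>b''\<in>UNIV. y l (hA@[a]) (hB@[b]) b'') = 0" using y len z unfolding real_plan2_def by auto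
    have nn: "\<forall>b''. 0 \<le> y l (hA@[a]) (hB@[b]) b''" using y len unfolding real_plan2_def by auto
    have "y l (hA@[a]) (hB@[b]) b' = 0" proof -
      have "y l (hA@[a]) (hB@[b]) b' \<le> (\<Sum>z\<in>UNIV. y l (hA@[a]) (hB@[b]) z)" by (rule member_le_sum) (use nn in auto)
      then show ?thesis using sm nn by (metis order_antisym)
    qed
    thus ?thesis using z by simp
  qed
qed

theorem lemma1:
  fixes M :: "'k::finite \<Rightarrow> 'l::finite \<Rightarrow> 'a::finite \<Rightarrow> 'b::finite \<Rightarrow> real"
    and p :: "'k \<Rightarrow> real" and q :: "'l \<Rightarrow> real" and T :: nat
    and x :: "'k \<Rightarrow> 'a list \<Rightarrow> 'b list \<Rightarrow> 'a \<Rightarrow> real"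
    and y :: "'l \<Rightarrow> 'a list \<Rightarrow> 'b list \<Rightarrow> 'b \<Rightarrow> real"
  assumes T: "T \<ge> 1"
    and p: "\<forall>k. p k > 0" "(\<Sum>k\<in>UNIV. p k) = 1"
    and q: "\<forall>l. q l > 0" "(\<Sum>l\<in>UNIV. q l) = 1"
    and x: "real_plan1 T p x"
    and y: "real_plan2 T q y"
  shows "\<forall>l k.
    u0 T M p x l =
      (INF \<tau>\<in>{d. is_dist d}. \<Sum>b\<in>UNIV.
         ((\<Sum>k\<in>UNIV. \<Sum>a\<in>UNIV. x k [] [] a * M k l a b) + (\<Sum>a\<in>UNIV. u_ab T M p x l [] [] a b)) * \<tau> b)
  \<and> w0 T M q y k =
      (SUP \<sigma>\<in>{d. is_dist d}. \<Sum>a\<in>UNIV. \<sigma> a *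
         ((\<Sum>l\<in>UNIV. \<Sum>b\<in>UNIV. M k l a b * y l [] [] b) + (\<Sum>b\<in>UNIV. w_ab T M q y k [] [] a b)))
  \<and> (\<forall>hA hB a b. length hA = length hB \<and> length hA + 2 \<le> T \<longrightarrow>
       u_ab T M p x l hA hB a b =
         (INF \<tau>\<in>{d. is_dist d}. \<Sum>b'\<in>UNIV.
            ((\<Sum>k\<in>UNIV. \<Sum>a'\<in>UNIV. x k (hA @ [a]) (hB @ [b]) a' * M k l a' b')
             + (\<Sum>a'\<in>UNIV. u_ab T M p x l (hA @ [a]) (hB @ [b]) a' b')) * \<tau> b')
     \<and> w_ab T M q y k hA hB a b =
         (SUP \<sigma>\<in>{d. is_dist d}. \<Sum>a'\<in>UNIV. \<sigma> a' *
            ((\<Sum>l\<in>UNIV. \<Sum>b'\<in>UNIV. M k l a' b' * y l (hA @ [a]) (hB @ [b]) b')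
             + (\<Sum>b'\<in>UNIV. w_ab T M q y k (hA @ [a]) (hB @ [b]) a' b'))))"
proof (intro allI conjI impI)
  fix l :: 'l and k :: 'k
  obtain n0 where Tn: "T = Suc n0" using T by (cases T) auto
  have wp: "p k * sigma_of p x k [] [] a = x k [] [] a" for k a
    using p(1)[rule_format, of k] by (simp add: sigma_of_def Let_def)
  have wq: "q l * tau_of q y l [] [] b = y l [] [] b" for l b
    using q(1)[rule_format, of l] by (simp add: tau_of_def Let_def)
  have "u0 T M p x l = (INF \<tau>\<in>beh. \<Sum>k\<in>UNIV. p k * fut (Suc n0) M (sigma_of p x) (\<lambda>_. \<tau>) k l [] [])"
    unfolding u0_def Tn ..
  also have "\<dots> = (INF \<delta>\<in>{\<delta>. is_dist \<delta>}. \<Sum>b\<in>UNIV. ((\<Sum>k\<in>UNIV. \<Sum>a\<in>UNIV. x k [] [] a * M k l a b) +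
      (\<Sum>a\<in>UNIV. (INF \<tau>\<in>beh. \<Sum>k\<in>UNIV. x k [] [] a * fut n0 M (sigma_of p x) (\<lambda>_. \<tau>) k l ([]@[a]) ([]@[b])))) * \<delta> b)"
    by (rule u_step) (rule wp)
  also have "\<dots> = (INF \<tau>\<in>{d. is_dist d}. \<Sum>b\<in>UNIV.
         ((\<Sum>k\<in>UNIV. \<Sum>a\<in>UNIV. x k [] [] a * M k l a b) + (\<Sum>a\<in>UNIV. u_ab T M p x l [] [] a b)) * \<tau> b)"
    by (simp add: u_ab_def Tn)
  finally show "u0 T M p x l = (INF \<tau>\<in>{d. is_dist d}. \<Sum>b\<in>UNIV.
         ((\<Sum>k\<in>UNIV. \<Sum>a\<in>UNIV. x k [] [] a * M k l a b) + (\<Sum>a\<in>UNIV. u_ab T M p x l [] [] a b)) * \<tau> b)" .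
  have "w0 T M q y k = (SUP \<sigma>\<in>beh. \<Sum>l\<in>UNIV. q l * fut (Suc n0) M (\<lambda>_. \<sigma>) (tau_of q y) k l [] [])"
    unfolding w0_def Tn ..
  also have "\<dots> = (SUP \<delta>\<in>{\<delta>. is_dist \<delta>}. \<Sum>a\<in>UNIV. \<delta> a * ((\<Sum>l\<in>UNIV. \<Sum>b\<in>UNIV. M k l a b * y l [] [] b) +
      (\<Sum>b\<in>UNIV. (SUP \<sigma>\<in>beh. \<Sum>l\<in>UNIV. y l [] [] b * fut n0 M (\<lambda>_. \<sigma>) (tau_of q y) k l ([]@[a]) ([]@[b])))))"
    by (rule w_step) (rule wq)
  also have "\<dots> = (SUP \<sigma>\<in>{d. is_dist d}. \<Sum>a\<in>UNIV. \<sigma> a *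
         ((\<Sum>l\<in>UNIV. \<Sum>b\<in>UNIV. M k l a b * y l [] [] b) + (\<Sum>b\<in>UNIV. w_ab T M q y k [] [] a b)))"
    by (simp add: w_ab_def Tn)
  finally show "w0 T M q y k = (SUP \<sigma>\<in>{d. is_dist d}. \<Sum>a\<in>UNIV. \<sigma> a *
         ((\<Sum>l\<in>UNIV. \<Sum>b\<in>UNIV. M k l a b * y l [] [] b) + (\<Sum>b\<in>UNIV. w_ab T M q y k [] [] a b)))" .
  fix hA :: "'a list" and hB :: "'b list" and a b
  assume len: "length hA = length hB \<and> length hA + 2 \<le> T"
  define m where "m = T - Suc (Suc (length hA))"
  have Tm: "T - Suc (length hA) = Suc m" using len unfolding m_def by arith
  have Tm2: "T - Suc (length (hA @ [a])) = m" unfolding m_def by simp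
  have "u_ab T M p x l hA hB a b = (INF \<tau>\<in>beh. \<Sum>k\<in>UNIV. x k hA hB a * fut (Suc m) M (sigma_of p x) (\<lambda>_. \<tau>) k l (hA@[a]) (hB@[b]))"
    unfolding u_ab_def Tm by (rule refl)
  also have "\<dots> = (INF \<delta>\<in>{\<delta>. is_dist \<delta>}. \<Sum>b'\<in>UNIV. ((\<Sum>k\<in>UNIV. \<Sum>a'\<in>UNIV. x k (hA@[a]) (hB@[b]) a' * M k l a' b') +
      (\<Sum>a'\<in>UNIV. (INF \<tau>\<in>beh. \<Sum>k\<in>UNIV. x k (hA@[a]) (hB@[b]) a' * fut m M (sigma_of p x) (\<lambda>_. \<tau>) k l ((hA@[a])@[a']) ((hB@[b])@[b'])))) * \<delta> b')"
    using len by (intro u_step[where wt="\<lambda>k. x k hA hB a" and W="\<lambda>k a'. x k (hA@[a]) (hB@[b]) a'"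
        and h0A="hA@[a]" and h0B="hB@[b]" and \<sigma>="sigma_of p x" and n=m and l=l and M=M] wsig[OF x]) auto
  also have "\<dots> = (INF \<tau>\<in>{d. is_dist d}. \<Sum>b'\<in>UNIV.
            ((\<Sum>k\<in>UNIV. \<Sum>a'\<in>UNIV. x k (hA @ [a]) (hB @ [b]) a' * M k l a' b')
             + (\<Sum>a'\<in>UNIV. u_ab T M p x l (hA @ [a]) (hB @ [b]) a' b')) * \<tau> b')"
    unfolding u_ab_def Tm2 append_assoc by (rule refl)
  finally show "u_ab T M p x l hA hB a b = (INF \<tau>\<in>{d. is_dist d}. \<Sum>b'\<in>UNIV.
            ((\<Sum>k\<in>UNIV. \<Sum>a'\<in>UNIV. x k (hA @ [a]) (hB @ [b]) a' * M k l a' b')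
             + (\<Sum>a'\<in>UNIV. u_ab T M p x l (hA @ [a]) (hB @ [b]) a' b')) * \<tau> b')" .
  have "w_ab T M q y k hA hB a b = (SUP \<sigma>\<in>beh. \<Sum>l\<in>UNIV. y l hA hB b * fut (Suc m) M (\<lambda>_. \<sigma>) (tau_of q y) k l (hA@[a]) (hB@[b]))"
    unfolding w_ab_def Tm by (rule refl)
  also have "\<dots> = (SUP \<delta>\<in>{\<delta>. is_dist \<delta>}. \<Sum>a'\<in>UNIV. \<delta> a' * ((\<Sum>l\<in>UNIV. \<Sum>b'\<in>UNIV. M k l a' b' * y l (hA@[a]) (hB@[b]) b') +
      (\<Sum>b'\<in>UNIV. (SUP \<sigma>\<in>beh. \<Sum>l\<in>UNIV. y l (hA@[a]) (hB@[b]) b' * fut m M (\<lambda>_. \<sigma>) (tau_of q y) k l ((hA@[a])@[a']) ((hB@[b])@[b'])))))"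
    using len by (intro w_step[where wt="\<lambda>l. y l hA hB b" and W="\<lambda>l b'. y l (hA@[a]) (hB@[b]) b'"
        and h0A="hA@[a]" and h0B="hB@[b]" and \<tau>="tau_of q y" and n=m and k=k and M=M] wtau[OF y]) auto
  also have "\<dots> = (SUP \<sigma>\<in>{d. is_dist d}. \<Sum>a'\<in>UNIV. \<sigma> a' *
            ((\<Sum>l\<in>UNIV. \<Sum>b'\<in>UNIV. M k l a' b' * y l (hA @ [a]) (hB @ [b]) b')
             + (\<Sum>b'\<in>UNIV. w_ab T M q y k (hA @ [a]) (hB @ [b]) a' b')))"
    unfolding w_ab_def Tm2 append_assoc by (rule refl)
  finally show "w_ab T M q y k hA hB a b = (SUP \<sigma>\<in>{d. is_dist d}. \<Sum>a'\<in>UNIV. \<sigma> a' *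
            ((\<Sum>l\<in>UNIV. \<Sum>b'\<in>UNIV. M k l a' b' * y l (hA @ [a]) (hB @ [b]) b')
             + (\<Sum>b'\<in>UNIV. w_ab T M q y k (hA @ [a]) (hB @ [b]) a' b')))" .
qed

end
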